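(* Let $(R,\mathfrak m)$ be a Noetherian local ring, $X$ a finitely generated $R$-module, $N$ a Burch submodule of $X$, $t\ge1$ an integer, and $M$ a finitely generated $R$-module such that either (1) $\operatorname{Tor}_t^R(M,N)=\operatorname{Tor}_{t-1}^R(M,N)=0$, or (2) $\operatorname{Ext}^{t+1}_R(M,N)=\operatorname{Ext}^t_R(M,N)=0$. Then $\operatorname{pd}_R M<t$.
   Context: $\operatorname{Tor}_0^R(M,N)=M\otimes_RN$. For a submodule $N\subseteq X$, $(N:_X\mathfrak m)=\{x\in X:\mathfrak m x\subseteq N\}$. $N$ is a Burch submodule of $X$ if $\mathfrak m(N:_X\mathfrak m)\neq\mathfrak m N$. The projective dimension of the zero module is $-\infty$. *)

theory Defs
  imports Complex_Main
begin

text \<open>The maximal ideal of a local ring: the set of non-units.\<close>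
definition maxid :: "'a::comm_ring_1 set" where
  "maxid = {x. \<not> x dvd 1}"

definition local_ring :: "'a::comm_ring_1 itself \<Rightarrow> bool" where
  "local_ring _ \<longleftrightarrow> (0::'a) \<noteq> 1 \<and>
     (\<forall>x y::'a. x \<in> maxid \<longrightarrow> y \<in> maxid \<longrightarrow> x + y \<in> maxid)"

definition noetherian_ring :: "'a::comm_ring_1 itself \<Rightarrow> bool" where
  "noetherian_ring _ \<longleftrightarrow>
     (\<forall>I::'a set. module.subspace (*) I \<longrightarrow>
        (\<exists>S. finite S \<and> S \<subseteq> I \<and> module.span (*) S = I))"

definition fin_gen :: "('a::comm_ring_1 \<Rightarrow> 'b::ab_group_add \<Rightarrow> 'b) \<Rightarrow> bool" where
  "fin_gen sc \<longleftrightarrow> (\<exists>S. finite S \<and> module.span sc S = UNIV)"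

definition ideal_times :: "('a::comm_ring_1 \<Rightarrow> 'b::ab_group_add \<Rightarrow> 'b) \<Rightarrow> 'a set \<Rightarrow> 'b set \<Rightarrow> 'b set" where
  "ideal_times sc I L = module.span sc {sc r x | r x. r \<in> I \<and> x \<in> L}"

definition colon_max :: "('a::comm_ring_1 \<Rightarrow> 'b::ab_group_add \<Rightarrow> 'b) \<Rightarrow> 'b set \<Rightarrow> 'b set" where
  "colon_max sc N = {x. \<forall>r\<in>maxid. sc r x \<in> N}"

definition burch_submodule :: "('a::comm_ring_1 \<Rightarrow> 'b::ab_group_add \<Rightarrow> 'b) \<Rightarrow> 'b set \<Rightarrow> bool" where
  "burch_submodule sc N \<longleftrightarrow> module.subspace sc N \<and>
     ideal_times sc maxid (colon_max sc N) \<noteq> ideal_times sc maxid N"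

text \<open>Elements of R^n: functions nat => 'a vanishing from index n on.\<close>
definition fvec :: "nat \<Rightarrow> (nat \<Rightarrow> 'a::zero) set" where
  "fvec n = {v. \<forall>k\<ge>n. v k = 0}"

text \<open>Elements of N^n for a subset N.\<close>
definition ftup :: "'b set \<Rightarrow> nat \<Rightarrow> (nat \<Rightarrow> 'b::zero) set" where
  "ftup N n = {y. (\<forall>k. y k \<in> N) \<and> (\<forall>k\<ge>n. y k = 0)}"

text \<open>Differential d_i : R^(b i) -> R^(b (i-1)), given by matrix d i (row j, column k), i >= 1.\<close>
definition dmap :: "(nat \<Rightarrow> nat) \<Rightarrow> (nat \<Rightarrow> nat \<Rightarrow> nat \<Rightarrow> 'a::comm_ring_1) \<Rightarrow> nat \<Rightarrow> (nat \<Rightarrow> 'a) \<Rightarrow> nat \<Rightarrow> 'a" where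
  "dmap b d i v = (\<lambda>j. if j < b (i - 1) then (\<Sum>k<b i. d i j k * v k) else 0)"

text \<open>Augmentation R^(b 0) -> M sending the k-th basis vector to g k.\<close>
definition augm :: "('a::comm_ring_1 \<Rightarrow> 'n::ab_group_add \<Rightarrow> 'n) \<Rightarrow> (nat \<Rightarrow> nat) \<Rightarrow> (nat \<Rightarrow> 'n) \<Rightarrow> (nat \<Rightarrow> 'a) \<Rightarrow> 'n" where
  "augm sM b g v = (\<Sum>k<b 0. sM (v k) (g k))"

text \<open>A resolution ... -> R^(b 1) -> R^(b 0) -> M -> 0 of M by finite free modules
  (M is the whole type 'n with scalar multiplication sM).\<close>
definition free_resolution :: "('a::comm_ring_1 \<Rightarrow> 'n::ab_group_add \<Rightarrow> 'n) \<Rightarrow> (nat \<Rightarrow> nat)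
    \<Rightarrow> (nat \<Rightarrow> nat \<Rightarrow> nat \<Rightarrow> 'a) \<Rightarrow> (nat \<Rightarrow> 'n) \<Rightarrow> bool" where
  "free_resolution sM b d g \<longleftrightarrow>
     (\<forall>m. \<exists>v\<in>fvec (b 0). augm sM b g v = m) \<and>
     (\<forall>v\<in>fvec (b 0). augm sM b g v = 0 \<longleftrightarrow> (\<exists>w\<in>fvec (b 1). v = dmap b d 1 w)) \<and>
     (\<forall>i\<ge>1. \<forall>v\<in>fvec (b i). dmap b d i v = (\<lambda>_. 0) \<longleftrightarrow> (\<exists>w\<in>fvec (b (Suc i)). v = dmap b d (Suc i) w))"

text \<open>d_i tensor N : N^(b i) -> N^(b (i-1)), i >= 1.\<close>
definition tor_map :: "('a::comm_ring_1 \<Rightarrow> 'x::ab_group_add \<Rightarrow> 'x) \<Rightarrow> (nat \<Rightarrow> nat)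
    \<Rightarrow> (nat \<Rightarrow> nat \<Rightarrow> nat \<Rightarrow> 'a) \<Rightarrow> nat \<Rightarrow> (nat \<Rightarrow> 'x) \<Rightarrow> nat \<Rightarrow> 'x" where
  "tor_map sX b d i y = (\<lambda>j. if j < b (i - 1) then (\<Sum>k<b i. sX (d i j k) (y k)) else 0)"

text \<open>Hom(d_i, N) : N^(b (i-1)) -> N^(b i), i >= 1.\<close>
definition ext_map :: "('a::comm_ring_1 \<Rightarrow> 'x::ab_group_add \<Rightarrow> 'x) \<Rightarrow> (nat \<Rightarrow> nat)
    \<Rightarrow> (nat \<Rightarrow> nat \<Rightarrow> nat \<Rightarrow> 'a) \<Rightarrow> nat \<Rightarrow> (nat \<Rightarrow> 'x) \<Rightarrow> nat \<Rightarrow> 'x" where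
  "ext_map sX b d i y = (\<lambda>k. if k < b i then (\<Sum>j<b (i - 1). sX (d i j k) (y j)) else 0)"

text \<open>Tor_i^R(M,N) = 0 (homology of F tensor N at degree i; the map out of degree 0 is zero).
  Computed with respect to every finite free resolution of M (all give isomorphic Tor).\<close>
definition Tor_vanishes :: "('a::comm_ring_1 \<Rightarrow> 'n::ab_group_add \<Rightarrow> 'n) \<Rightarrow>
    ('a \<Rightarrow> 'x::ab_group_add \<Rightarrow> 'x) \<Rightarrow> 'x set \<Rightarrow> nat \<Rightarrow> bool" where
  "Tor_vanishes sM sX N i \<longleftrightarrow>
     (\<forall>b d g. free_resolution sM b d g \<longrightarrow>
        (\<forall>y\<in>ftup N (b i). (i = 0 \<or> tor_map sX b d i y = (\<lambda>_. 0)) \<longrightarrow>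
           (\<exists>z\<in>ftup N (b (Suc i)). y = tor_map sX b d (Suc i) z)))"

text \<open>Ext^i_R(M,N) = 0 (cohomology of Hom(F,N) at degree i; the map into degree 0 is zero).\<close>
definition Ext_vanishes :: "('a::comm_ring_1 \<Rightarrow> 'n::ab_group_add \<Rightarrow> 'n) \<Rightarrow>
    ('a \<Rightarrow> 'x::ab_group_add \<Rightarrow> 'x) \<Rightarrow> 'x set \<Rightarrow> nat \<Rightarrow> bool" where
  "Ext_vanishes sM sX N i \<longleftrightarrow>
     (\<forall>b d g. free_resolution sM b d g \<longrightarrow>
        (\<forall>y\<in>ftup N (b i). ext_map sX b d (Suc i) y = (\<lambda>_. 0) \<longrightarrow>
           (if i = 0 then y = (\<lambda>_. 0)
            else (\<exists>z\<in>ftup N (b (i - 1)). y = ext_map sX b d i z))))"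

text \<open>pd_R M < t: M has a finite free (= projective, R local, M f.g.) resolution with
  F_i = 0 for all i >= t. (For M = 0, pd = -infinity, and b = 0 works.)\<close>
definition pd_less :: "('a::comm_ring_1 \<Rightarrow> 'n::ab_group_add \<Rightarrow> 'n) \<Rightarrow> nat \<Rightarrow> bool" where
  "pd_less sM t \<longleftrightarrow> (\<exists>b d g. free_resolution sM b d g \<and> (\<forall>i\<ge>t. b i = 0))"

end

theory Submission
  imports Defs "HOL-Library.Function_Algebras"
begin



definition vsc :: "'a::comm_ring_1 \<Rightarrow> (nat \<Rightarrow> 'a) \<Rightarrow> nat \<Rightarrow> 'a" where
  "vsc r v = (\<lambda>j. r * v j)"

lemma vsc_apply[simp]: "vsc r v j = r * v j" by (simp add: vsc_def)

lemma module_vsc: "module (vsc :: 'a::comm_ring_1 \<Rightarrow> _)"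
  by unfold_locales (auto simp: vsc_def fun_eq_iff algebra_simps)

lemma module_mult: "module ((*) :: 'a::comm_ring_1 \<Rightarrow> _)"
  by unfold_locales (auto simp: algebra_simps)

lemma sum_fun_apply: "(\<Sum>k\<in>A. (f k :: 'b \<Rightarrow> 'c::comm_monoid_add)) j = (\<Sum>k\<in>A. f k j)"
  by (induction A rule: infinite_finite_induct) auto

definition gens :: "('a::comm_ring_1 \<Rightarrow> 'b::ab_group_add \<Rightarrow> 'b) \<Rightarrow> 'b set \<Rightarrow> ('i \<Rightarrow> 'b) \<Rightarrow> 'i set \<Rightarrow> bool" where
  "gens s K G A \<longleftrightarrow> finite A \<and> (\<forall>k\<in>A. G k \<in> K) \<and> (\<forall>x\<in>K. \<exists>c. (\<Sum>k\<in>A. s (c k) (G k)) = x)"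

lemma gens_reindex_nat:
  assumes "gens s K G A"
  shows "\<exists>G'. gens s K G' {..<card A}"
proof -
  have fin: "finite A" using assms by (simp add: gens_def)
  obtain h where h: "bij_betw h {0..<card A} A" using ex_bij_betw_nat_finite[OF fin] by blast
  have "gens s K (G \<circ> h) {..<card A}"
    unfolding gens_def
  proof (intro conjI ballI)
    show "finite {..<card A}" by simp
    fix k assume "k \<in> {..<card A}"
    then have "h k \<in> A" using h by (auto simp: bij_betw_def atLeast0LessThan)
    then show "(G \<circ> h) k \<in> K" using assms by (simp add: gens_def)
  next
    fix x assume "x \<in> K"
    then obtain c where c: "(\<Sum>k\<in>A. s (c k) (G k)) = x" using assms by (auto simp: gens_def)
    have "(\<Sum>k\<in>{..<card A}. s ((c \<circ> h) k) ((G \<circ> h) k)) = (\<Sum>k\<in>A. s (c k) (G k))"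
      using sum.reindex_bij_betw[OF h, of "\<lambda>k. s (c k) (G k)"] by (simp add: atLeast0LessThan)
    then show "\<exists>c. (\<Sum>k\<in>{..<card A}. s (c k) ((G \<circ> h) k)) = x" using c by metis
  qed
  then show ?thesis by blast
qed

definition mingens :: "('a::comm_ring_1 \<Rightarrow> 'b::ab_group_add \<Rightarrow> 'b) \<Rightarrow> 'b set \<Rightarrow> nat \<Rightarrow> (nat \<Rightarrow> 'b) \<Rightarrow> bool" where
  "mingens s K m G \<longleftrightarrow> gens s K G {..<m} \<and> (\<forall>m' G'. gens s K G' {..<m'} \<longrightarrow> m \<le> m')"

lemma mingens_ex:
  assumes "gens s K G A"
  shows "\<exists>m G. mingens s K m G"
proof -
  let ?P = "\<lambda>m::nat. \<exists>G::nat \<Rightarrow> 'b. gens s K G {..<m}"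
  have "?P (card A)" using gens_reindex_nat[OF assms] .
  then have "?P (LEAST m. ?P m)" by (rule LeastI)
  moreover have "\<forall>m' G'. gens s K G' {..<m'} \<longrightarrow> (LEAST m. ?P m) \<le> m'"
    by (auto intro: Least_le)
  ultimately show ?thesis unfolding mingens_def by blast
qed

definition mg :: "('a::comm_ring_1 \<Rightarrow> 'b::ab_group_add \<Rightarrow> 'b) \<Rightarrow> 'b set \<Rightarrow> nat \<times> (nat \<Rightarrow> 'b)" where
  "mg s K = (SOME p. mingens s K (fst p) (snd p))"

lemma mg:
  assumes "gens s K G A"
  shows "mingens s K (fst (mg s K)) (snd (mg s K))"
proof -
  obtain m G where "mingens s K m G" using mingens_ex[OF assms] by blast
  then have "\<exists>p. mingens s K (fst p) (snd p)" by (intro exI[of _ "(m, G)"]) simp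
  then show ?thesis unfolding mg_def by (rule someI_ex)
qed

lemma mingens_rel:
  assumes ms: "module s" and mn: "mingens s K m G"
    and rel: "(\<Sum>l<m. s (c l) (G l)) = 0" and k: "k < m"
  shows "c k \<in> (maxid :: 'a::comm_ring_1 set)"
proof (rule ccontr)
  interpret module s by (rule ms)
  assume "c k \<notin> maxid"
  then obtain u where u: "1 = c k * u" by (auto simp: maxid_def dvd_def)
  let ?A = "{..<m}" and ?B = "{..<m} - {k}"
  have kA: "k \<in> ?A" using k by simp
  have sr: "(\<Sum>l\<in>?A. s (f l) (G l)) = s (f k) (G k) + (\<Sum>l\<in>?B. s (f l) (G l))" for f
    using sum.remove[OF _ kA, of "\<lambda>l. s (f l) (G l)"] by simp
  have gB: "gens s K G ?B"
    unfolding gens_def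
  proof (intro conjI ballI)
    show "finite ?B" by simp
    fix l assume "l \<in> ?B" then show "G l \<in> K" using mn by (auto simp: mingens_def gens_def)
  next
    fix x assume "x \<in> K"
    then obtain c' where c': "(\<Sum>l\<in>?A. s (c' l) (G l)) = x" using mn by (auto simp: mingens_def gens_def)
    have cB: "(\<Sum>l\<in>?B. s (c l) (G l)) = - s (c k) (G k)"
      using sr[of c] rel by (simp add: eq_neg_iff_add_eq_0 add.commute lessThan_def)
    have "(\<Sum>l\<in>?B. s (c' l - c' k * u * c l) (G l))
        = (\<Sum>l\<in>?B. s (c' l) (G l)) - s (c' k * u) (\<Sum>l\<in>?B. s (c l) (G l))"
      by (simp add: scale_left_diff_distrib sum_subtractf scale_sum_right)
    also have "\<dots> = (\<Sum>l\<in>?B. s (c' l) (G l)) + s (c' k * u * c k) (G k)"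
      using cB by simp
    also have "\<dots> = (\<Sum>l\<in>?B. s (c' l) (G l)) + s (c' k) (G k)"
      using u by (simp add: mult.assoc mult.commute[of u])
    also have "\<dots> = x" using sr[of c'] c' by (simp add: add.commute)
    finally show "\<exists>e. (\<Sum>l\<in>?B. s (e l) (G l)) = x" by (intro exI[where x="\<lambda>l. c' l - c' k * u * c l"])
  qed
  obtain G' where "gens s K G' {..<card ?B}" using gens_reindex_nat[OF gB] by blast
  moreover have "card ?B < m" using k by simp
  ultimately show False using mn by (auto simp: mingens_def dest: spec2[of _ "card ?B"] leD)
qed



lemma noeth_sub:
  assumes noeth: "noetherian_ring TYPE('a::comm_ring_1)"
  shows "(K::(nat \<Rightarrow> 'a) set) \<subseteq> fvec n \<Longrightarrow> module.subspace vsc K \<Longrightarrow> \<exists>G (A::nat set). gens vsc K G A"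
proof (induction n arbitrary: K)
  case 0
  then have "\<forall>x\<in>K. x = 0" by (auto simp: fvec_def fun_eq_iff)
  then have "gens vsc K (\<lambda>_. 0) ({}::nat set)" by (auto simp: gens_def)
  then show ?case by blast
next
  case (Suc n)
  interpret V: module "vsc :: 'a \<Rightarrow> _" by (rule module_vsc)
  interpret R: module "(*) :: 'a \<Rightarrow> _" by (rule module_mult)
  define I where "I = (\<lambda>v. v n) ` K"
  have sI: "R.subspace I"
    unfolding R.subspace_def I_def
  proof (intro conjI ballI allI)
    show "0 \<in> (\<lambda>v. v n) ` K" using V.subspace_0[OF Suc.prems(2)] by (intro image_eqI[of _ _ "0"]) auto
  next
    fix a b assume "a \<in> (\<lambda>v. v n) ` K" "b \<in> (\<lambda>v. v n) ` K"
    then obtain v w where "v \<in> K" "w \<in> K" "a = v n" "b = w n" by auto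
    then show "a + b \<in> (\<lambda>v. v n) ` K"
      using V.subspace_add[OF Suc.prems(2)] by (intro image_eqI[of _ _ "v + w"]) auto
  next
    fix c a assume "a \<in> (\<lambda>v. v n) ` K"
    then obtain v where "v \<in> K" "a = v n" by auto
    then show "c * a \<in> (\<lambda>v. v n) ` K"
      using V.subspace_scale[OF Suc.prems(2)] by (intro image_eqI[of _ _ "vsc c v"]) auto
  qed
  obtain S where S: "finite S" "S \<subseteq> I" "R.span S = I"
    using noeth sI unfolding noetherian_ring_def by blast
  have "\<forall>s\<in>S. \<exists>v. v \<in> K \<and> v n = s" using S(2) unfolding I_def by auto
  then obtain h where h: "\<And>s. s \<in> S \<Longrightarrow> h s \<in> K \<and> h s n = s" by metis
  define K' where "K' = {v\<in>K. v n = 0}"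
  have K'f: "K' \<subseteq> fvec n"
  proof
    fix v assume "v \<in> K'"
    then have "v \<in> fvec (Suc n)" "v n = 0" using Suc.prems(1) by (auto simp: K'_def)
    then show "v \<in> fvec n" unfolding fvec_def
    proof (intro CollectI allI impI)
      fix k assume "k \<ge> n" "v \<in> {v. \<forall>k\<ge>Suc n. v k = 0}" "v n = 0"
      then show "v k = 0" by (cases "k = n") auto
    qed
  qed
  have K's: "V.subspace K'"
    unfolding V.subspace_def K'_def
    using V.subspace_0[OF Suc.prems(2)] V.subspace_add[OF Suc.prems(2)] V.subspace_scale[OF Suc.prems(2)]
    by auto
  obtain G1 and A1 :: "nat set" where g1: "gens vsc K' G1 A1" using Suc.IH[OF K'f K's] by blast
  define G where "G = case_sum G1 h"
  define A where "A = Inl ` A1 \<union> Inr ` S"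
  have "gens vsc K G A"
    unfolding gens_def
  proof (intro conjI ballI)
    show "finite A" using g1 S(1) by (auto simp: A_def gens_def)
  next
    fix i assume "i \<in> A"
    then show "G i \<in> K" using g1 h by (auto simp: A_def G_def gens_def K'_def)
  next
    fix x assume xK: "x \<in> K"
    then have "x n \<in> R.span S" using S(3) by (auto simp: I_def)
    then obtain u where u: "x n = (\<Sum>v\<in>S. u v * v)" using R.span_finite[OF S(1)] by auto
    define y where "y = x - (\<Sum>s\<in>S. vsc (u s) (h s))"
    have yK: "y \<in> K" unfolding y_def
      using h by (intro V.subspace_diff[OF Suc.prems(2) xK] V.subspace_sum[OF Suc.prems(2)]
          V.subspace_scale[OF Suc.prems(2)]) auto
    have "y n = 0" unfolding y_def using u h by (simp add: sum_fun_apply)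
    then have "y \<in> K'" using yK by (simp add: K'_def)
    then obtain c where c: "(\<Sum>a\<in>A1. vsc (c a) (G1 a)) = y" using g1 by (auto simp: gens_def)
    have "(\<Sum>i\<in>A. vsc (case_sum c u i) (G i))
        = (\<Sum>i\<in>Inl ` A1. vsc (case_sum c u i) (G i)) + (\<Sum>i\<in>Inr ` S. vsc (case_sum c u i) (G i))"
      unfolding A_def using g1 S(1) by (intro sum.union_disjoint) (auto simp: gens_def)
    also have "\<dots> = (\<Sum>a\<in>A1. vsc (c a) (G1 a)) + (\<Sum>s\<in>S. vsc (u s) (h s))"
      by (simp add: sum.reindex G_def)
    also have "\<dots> = x" using c by (simp add: y_def)
    finally show "\<exists>c. (\<Sum>i\<in>A. vsc (c i) (G i)) = x" by (intro exI[where x="case_sum c u"])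
  qed
  then show ?case using gens_reindex_nat by blast
qed

definition kerof :: "('a::comm_ring_1 \<Rightarrow> 'b::ab_group_add \<Rightarrow> 'b) \<Rightarrow> nat \<times> (nat \<Rightarrow> 'b) \<Rightarrow> (nat \<Rightarrow> 'a) set" where
  "kerof s p = {v \<in> fvec (fst p). (\<Sum>k<fst p. s (v k) (snd p k)) = 0}"

lemma kerof_sub:
  assumes ms: "module s"
  shows "kerof s p \<subseteq> fvec (fst p) \<and> module.subspace vsc (kerof s p)"
proof -
  interpret module s by (rule ms)
  have *: "(\<Sum>k<m. s (c * x k) (G k)) = s c (\<Sum>k<m. s (x k) (G k))" for m c x G
    by (simp add: scale_sum_right)
  show ?thesis
    unfolding kerof_def module.subspace_def[OF module_vsc]
    by (auto simp: fvec_def scale_left_distrib sum.distrib *)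
qed

primrec Sk :: "('a::comm_ring_1 \<Rightarrow> 'n::ab_group_add \<Rightarrow> 'n) \<Rightarrow> nat \<Rightarrow> (nat \<Rightarrow> 'a) set" where
  "Sk sM 0 = kerof sM (mg sM UNIV)"
| "Sk sM (Suc i) = kerof vsc (mg vsc (Sk sM i))"

fun bb :: "('a::comm_ring_1 \<Rightarrow> 'n::ab_group_add \<Rightarrow> 'n) \<Rightarrow> nat \<Rightarrow> nat" where
  "bb sM 0 = fst (mg sM UNIV)"
| "bb sM (Suc i) = fst (mg vsc (Sk sM i))"

fun dd :: "('a::comm_ring_1 \<Rightarrow> 'n::ab_group_add \<Rightarrow> 'n) \<Rightarrow> nat \<Rightarrow> nat \<Rightarrow> nat \<Rightarrow> 'a" where
  "dd sM 0 = (\<lambda>j k. 0)"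
| "dd sM (Suc i) = (\<lambda>j k. snd (mg vsc (Sk sM i)) k j)"

definition gg :: "('a::comm_ring_1 \<Rightarrow> 'n::ab_group_add \<Rightarrow> 'n) \<Rightarrow> nat \<Rightarrow> 'n" where
  "gg sM = snd (mg sM UNIV)"

lemma exact_gen:
  assumes "gens vsc K G {..<m}" "module.subspace vsc K"
  shows "v \<in> K \<longleftrightarrow> (\<exists>w\<in>fvec m. v = (\<Sum>k<m. vsc (w k) (G k)))"
proof -
  interpret V: module "vsc :: 'a::comm_ring_1 \<Rightarrow> _" by (rule module_vsc)
  show ?thesis
  proof
    assume "v \<in> K"
    then obtain c where c: "(\<Sum>k<m. vsc (c k) (G k)) = v" using assms(1) by (auto simp: gens_def)
    show "\<exists>w\<in>fvec m. v = (\<Sum>k<m. vsc (w k) (G k))"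
      by (rule bexI[where x="\<lambda>k. if k < m then c k else 0"]) (use c in \<open>auto simp: fvec_def\<close>)
  next
    assume "\<exists>w\<in>fvec m. v = (\<Sum>k<m. vsc (w k) (G k))"
    then show "v \<in> K" using assms
      by (auto intro!: V.subspace_sum V.subspace_scale simp: gens_def)
  qed
qed

lemma construct:
  fixes sM :: "'a::comm_ring_1 \<Rightarrow> 'n::ab_group_add \<Rightarrow> 'n"
  assumes noeth: "noetherian_ring TYPE('a)" and ms: "module sM" and fg: "fin_gen sM"
  shows "free_resolution sM (bb sM) (dd sM) (gg sM) \<and>
     (\<forall>i\<ge>1. \<forall>j<bb sM (i-1). \<forall>k<bb sM i. dd sM i j k \<in> maxid)"
proof -
  interpret M: module sM by (rule ms)
  interpret V: module "vsc :: 'a \<Rightarrow> _" by (rule module_vsc)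
  obtain S where S: "finite S" "M.span S = UNIV" using fg by (auto simp: fin_gen_def)
  have "gens sM UNIV (\<lambda>x. x) S" using S M.span_finite[OF S(1)] unfolding gens_def
    by (metis (no_types, lifting) UNIV_I rangeE)
  then have M0: "mingens sM UNIV (bb sM 0) (gg sM)" unfolding gg_def bb.simps by (rule mg)
  have Sub: "Sk sM i \<subseteq> fvec (bb sM i) \<and> V.subspace (Sk sM i)" for i
    by (cases i) (auto simp: kerof_sub[OF ms] kerof_sub[OF module_vsc])
  define GG where "GG i = snd (mg vsc (Sk sM i))" for i
  have Mi: "mingens vsc (Sk sM i) (bb sM (Suc i)) (GG i)" for i
  proof -
    obtain G A where "gens vsc (Sk sM i) G (A::nat set)" using noeth_sub[OF noeth] Sub by blast
    then show ?thesis unfolding GG_def bb.simps by (rule mg)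
  qed
  have GGf: "GG i k \<in> fvec (bb sM i)" if "k < bb sM (Suc i)" for i k
    using Mi[of i] Sub[of i] that by (auto simp: mingens_def gens_def)
  have col: "dmap (bb sM) (dd sM) (Suc i) w = (\<Sum>k<bb sM (Suc i). vsc (w k) (GG i k))" for i w
  proof
    fix j
    show "dmap (bb sM) (dd sM) (Suc i) w j = (\<Sum>k<bb sM (Suc i). vsc (w k) (GG i k)) j"
      using GGf[of _ i] by (auto simp: dmap_def sum_fun_apply GG_def mult.commute fvec_def
          intro!: sum.neutral)
  qed
  have ker0: "Sk sM 0 = {v \<in> fvec (bb sM 0). augm sM (bb sM) (gg sM) v = 0}"
    by (simp add: kerof_def augm_def gg_def)
  have kerS: "Sk sM (Suc i) = {v \<in> fvec (bb sM (Suc i)). dmap (bb sM) (dd sM) (Suc i) v = (\<lambda>_. 0)}" for i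
    by (simp add: kerof_def col GG_def zero_fun_def)
  have ex: "v \<in> Sk sM i \<longleftrightarrow> (\<exists>w\<in>fvec (bb sM (Suc i)). v = dmap (bb sM) (dd sM) (Suc i) w)" for i v
    using exact_gen[OF conjunct1[OF Mi[unfolded mingens_def]] conjunct2[OF Sub]] by (simp add: col)
  have fr: "free_resolution sM (bb sM) (dd sM) (gg sM)"
    unfolding free_resolution_def
  proof (intro conjI allI ballI impI)
    fix m
    obtain c where c: "(\<Sum>k<bb sM 0. sM (c k) (gg sM k)) = m"
      using M0 by (auto simp: mingens_def gens_def)
    show "\<exists>v\<in>fvec (bb sM 0). augm sM (bb sM) (gg sM) v = m"
      by (rule bexI[where x="\<lambda>k. if k < bb sM 0 then c k else 0"]) (use c in \<open>auto simp: fvec_def augm_def\<close>)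
  next
    fix v :: "nat \<Rightarrow> 'a" assume "v \<in> fvec (bb sM 0)"
    then show "(augm sM (bb sM) (gg sM) v = 0) = (\<exists>w\<in>fvec (bb sM 1). v = dmap (bb sM) (dd sM) 1 w)"
      using ex[of v 0] ker0 by simp
  next
    fix i and v :: "nat \<Rightarrow> 'a" assume i: "1 \<le> i" and v: "v \<in> fvec (bb sM i)"
    obtain i' where i': "i = Suc i'" using i by (cases i) auto
    show "(dmap (bb sM) (dd sM) i v = (\<lambda>_. 0)) = (\<exists>w\<in>fvec (bb sM (Suc i)). v = dmap (bb sM) (dd sM) (Suc i) w)"
      using ex[of v "Suc i'"] kerS[of i'] v i' by simp
  qed
  have mn: "dd sM i j k \<in> maxid" if i1: "1 \<le> i" "j < bb sM (i-1)" "k < bb sM i" for i j k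
  proof -
    obtain i' where i': "i = Suc i'" using i1 by (cases i) auto
    have mem: "GG i' k \<in> Sk sM i'" using Mi[of i'] that i' by (auto simp: mingens_def gens_def)
    show ?thesis
    proof (cases i')
      case 0
      have "(\<Sum>l<bb sM 0. sM (GG 0 k l) (gg sM l)) = 0" using mem 0 by (simp add: kerof_def gg_def)
      from mingens_rel[OF ms M0 this] that i' 0 show ?thesis by (simp add: GG_def)
    next
      case (Suc i'')
      have "(\<Sum>l<bb sM (Suc i''). vsc (GG (Suc i'') k l) (GG i'' l)) = 0"
        using mem Suc by (simp add: kerof_def GG_def)
      from mingens_rel[OF module_vsc Mi[of i''] this] that i' Suc show ?thesis by (simp add: GG_def)
    qed
  qed
  show ?thesis using fr mn by blast
qed



lemma res_comp:
  assumes fr: "free_resolution sM b d g" and i: "1 \<le> i" and j: "j < b (i-1)" and k: "k < b (Suc i)"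
  shows "(\<Sum>l<b i. d i j l * d (Suc i) l k) = 0"
proof -
  define e :: "nat \<Rightarrow> 'a::comm_ring_1" where "e = (\<lambda>l. if l = k then 1 else 0)"
  have ef: "e \<in> fvec (b (Suc i))" using k by (auto simp: e_def fvec_def)
  define v where "v = dmap b d (Suc i) e"
  have vf: "v \<in> fvec (b i)" by (auto simp: v_def dmap_def fvec_def)
  have "dmap b d i v = (\<lambda>_. 0)" using fr i vf ef unfolding free_resolution_def v_def by blast
  then have "dmap b d i v j = 0" by simp
  moreover have "v l = (if l < b i then d (Suc i) l k else 0)" for l
    using k by (simp add: v_def dmap_def e_def if_distrib[of "\<lambda>x. _ * x"] cong: if_cong)
  ultimately show ?thesis using j by (simp add: dmap_def)
qed

lemma burch_elem:
  assumes mx: "module sX" and bu: "burch_submodule sX N"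
  shows "\<exists>r x. r \<in> maxid \<and> x \<in> colon_max sX N \<and> sX r x \<notin> ideal_times sX maxid N"
proof (rule ccontr)
  interpret X: module sX by (rule mx)
  assume "\<not> ?thesis"
  then have all: "\<And>r x. r \<in> maxid \<Longrightarrow> x \<in> colon_max sX N \<Longrightarrow> sX r x \<in> ideal_times sX maxid N" by blast
  have NS: "X.subspace N" using bu by (simp add: burch_submodule_def)
  have "ideal_times sX maxid (colon_max sX N) \<subseteq> ideal_times sX maxid N"
    unfolding ideal_times_def[of _ _ "colon_max sX N"]
    by (rule X.span_minimal) (use all in \<open>auto simp: ideal_times_def\<close>)
  moreover have "N \<subseteq> colon_max sX N" using X.subspace_scale[OF NS] by (auto simp: colon_max_def)
  then have "ideal_times sX maxid N \<subseteq> ideal_times sX maxid (colon_max sX N)"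
    unfolding ideal_times_def by (intro X.span_mono) blast
  ultimately show False using bu by (auto simp: burch_submodule_def)
qed

lemma tor_lin:
  assumes "module sX"
  shows "tor_map sX b d i (\<lambda>l. sX r (y l - z l)) = (\<lambda>j. sX r (tor_map sX b d i y j - tor_map sX b d i z j))"
proof -
  interpret X: module sX by (rule assms)
  have tm: "sX a (sX r (p - q)) = sX r (sX a p - sX a q)" for a p q
    by (metis X.scale_left_commute X.scale_right_diff_distrib)
  show ?thesis
    unfolding tor_map_def fun_eq_iff
    by (simp only: tm sum_subtractf[symmetric] X.scale_sum_right[symmetric]) (simp add: sum_subtractf)
qed

lemma ext_lin:
  assumes "module sX"
  shows "ext_map sX b d i (\<lambda>l. sX r (y l - z l)) = (\<lambda>j. sX r (ext_map sX b d i y j - ext_map sX b d i z j))"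
proof -
  interpret X: module sX by (rule assms)
  have tm: "sX a (sX r (p - q)) = sX r (sX a p - sX a q)" for a p q
    by (metis X.scale_left_commute X.scale_right_diff_distrib)
  show ?thesis
    unfolding ext_map_def fun_eq_iff
    by (simp only: tm sum_subtractf[symmetric] X.scale_sum_right[symmetric]) (simp add: sum_subtractf)
qed

lemma truncate:
  assumes fr: "free_resolution sM b d g" and t: "t \<ge> 1" and bt: "b t = 0"
  shows "free_resolution sM (\<lambda>i. if t \<le> i then 0 else b i) d g"
proof -
  define b' where "b' = (\<lambda>i. if t \<le> i then 0 else b i)"
  have eq: "i \<le> t \<Longrightarrow> b' i = b i" for i using bt by (auto simp: b'_def)
  have dm: "i \<le> t \<Longrightarrow> dmap b' d i = dmap b d i" for i
    using eq[of i] eq[of "i - 1"] by (simp add: dmap_def fun_eq_iff)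
  have au: "augm sM b' g = augm sM b g" using eq[of 0] by (simp add: augm_def fun_eq_iff)
  have f0: "fvec 0 = {\<lambda>_. 0}" by (auto simp: fvec_def)
  have "free_resolution sM b' d g"
    unfolding free_resolution_def
  proof (intro conjI allI impI ballI)
    fix m show "\<exists>v\<in>fvec (b' 0). augm sM b' g v = m" using fr eq[of 0] au by (simp add: free_resolution_def)
  next
    fix v :: "nat \<Rightarrow> 'a" assume "v \<in> fvec (b' 0)"
    then show "(augm sM b' g v = 0) = (\<exists>w\<in>fvec (b' 1). v = dmap b' d 1 w)"
      using fr eq[of 0] eq[of 1] au dm[of 1] t by (simp add: free_resolution_def)
  next
    fix i and v :: "nat \<Rightarrow> 'a" assume i: "1 \<le> i" and v: "v \<in> fvec (b' i)"
    show "(dmap b' d i v = (\<lambda>_. 0)) = (\<exists>w\<in>fvec (b' (Suc i)). v = dmap b' d (Suc i) w)"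
    proof (cases "i < t")
      case True
      then show ?thesis using fr i v eq[of i] eq[of "Suc i"] dm[of i] dm[of "Suc i"]
        by (simp add: free_resolution_def)
    next
      case False
      then have "b' i = 0" "b' (Suc i) = 0" by (auto simp: b'_def)
      then have v0: "v = (\<lambda>_. 0)" using v by (auto simp: fvec_def)
      have "dmap b' d i v = (\<lambda>_. 0)" unfolding v0 dmap_def by (rule ext) simp
      moreover have z: "(\<lambda>_. 0) \<in> fvec (b' (Suc i))" by (simp add: fvec_def)
      moreover have "dmap b' d (Suc i) (\<lambda>_. 0) = (\<lambda>_. 0)" unfolding dmap_def by (rule ext) simp
      then have "\<exists>w\<in>fvec (b' (Suc i)). v = dmap b' d (Suc i) w"
        using z v0 by (intro bexI[of _ "\<lambda>_. 0"]) auto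
      ultimately show ?thesis using v0 by simp
    qed
  qed
  then show ?thesis by (simp add: b'_def)
qed



lemma burch_kills:
  fixes sM :: "'a::comm_ring_1 \<Rightarrow> 'n::ab_group_add \<Rightarrow> 'n"
    and sX :: "'a \<Rightarrow> 'x::ab_group_add \<Rightarrow> 'x"
  assumes mx: "module sX" and bu: "burch_submodule sX N"
    and fr: "free_resolution sM b d g" and t: "t \<ge> 1"
    and mn: "\<And>i j k. 1 \<le> i \<Longrightarrow> j < b (i-1) \<Longrightarrow> k < b i \<Longrightarrow> d i j k \<in> maxid"
    and van: "(Tor_vanishes sM sX N t \<and> Tor_vanishes sM sX N (t - 1)) \<or>
         (Ext_vanishes sM sX N (t + 1) \<and> Ext_vanishes sM sX N t)"
  shows "b t = 0"
proof (rule ccontr)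
  interpret X: module sX by (rule mx)
  assume "b t \<noteq> 0"
  then have bt: "0 < b t" by simp
  obtain r x where r: "r \<in> maxid" and x: "x \<in> colon_max sX N" and nL: "sX r x \<notin> ideal_times sX maxid N"
    using burch_elem[OF mx bu] by blast
  define L where "L = ideal_times sX maxid N"
  have NS: "X.subspace N" using bu by (simp add: burch_submodule_def)
  have LS: "X.subspace L" by (simp add: L_def ideal_times_def)
  have xN: "\<And>a. a \<in> maxid \<Longrightarrow> sX a x \<in> N" using x by (simp add: colon_max_def)
  have mL: "\<And>a y. a \<in> maxid \<Longrightarrow> y \<in> N \<Longrightarrow> sX a y \<in> L"
    unfolding L_def ideal_times_def by (rule X.span_base) blast
  define y where "y = (\<lambda>l::nat. if l = 0 then x else 0)"
  have sy: "(\<Sum>k<n. sX (f k) (y k)) = (if 0 < n then sX (f 0) x else 0)" for f n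
  proof -
    have "(\<Sum>k<n. sX (f k) (y k)) = (\<Sum>k<n. if k = 0 then sX (f k) x else 0)"
      by (rule sum.cong) (auto simp: y_def)
    then show ?thesis by (simp add: sum.delta)
  qed
  define w where "w z = (\<lambda>l. sX r (y l - z l))" for z
  have wf: "w z \<in> ftup N (b t)" if "z \<in> ftup N (b t)" for z
    unfolding ftup_def
  proof (intro CollectI conjI allI impI)
    fix l
    have "sX r (z l) \<in> N" using that X.subspace_scale[OF NS] by (auto simp: ftup_def)
    moreover have "sX r (y l) \<in> N" using xN[OF r] X.subspace_0[OF NS] by (simp add: y_def)
    ultimately show "w z l \<in> N" by (simp add: w_def X.scale_right_diff_distrib X.subspace_diff[OF NS])
  next
    fix l assume "b t \<le> l"
    then show "w z l = 0" using that bt by (auto simp: w_def y_def ftup_def)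
  qed
  have fin: "sX r x \<in> L" if zf: "z \<in> ftup N (b t)" and w0: "w z 0 \<in> L" for z
  proof -
    have "sX r (z 0) \<in> L" using mL[OF r] zf by (auto simp: ftup_def)
    then have "w z 0 + sX r (z 0) \<in> L" using w0 by (rule X.subspace_add[OF LS, rotated])
    then show ?thesis by (simp add: w_def y_def X.scale_right_diff_distrib)
  qed
  from van show False
  proof
    assume tv: "Tor_vanishes sM sX N t \<and> Tor_vanishes sM sX N (t - 1)"
    define Y1 where "Y1 = tor_map sX b d t y"
    have Y1: "Y1 j = (if j < b (t-1) then sX (d t j 0) x else 0)" for j
      using bt by (simp add: Y1_def tor_map_def sy)
    have Y1f: "Y1 \<in> ftup N (b (t-1))"
      using mn[OF t _ bt] xN X.subspace_0[OF NS] by (auto simp: ftup_def Y1)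
    have cyc: "t - 1 = 0 \<or> tor_map sX b d (t-1) Y1 = (\<lambda>_. 0)"
    proof (cases "t = 1")
      case False
      then have t1: "1 \<le> t - 1" "Suc (t-1) = t" using t by auto
      have "tor_map sX b d (t-1) Y1 j = 0" for j
      proof -
        have "(\<Sum>l<b (t-1). sX (d (t-1) j l) (Y1 l)) = sX (\<Sum>l<b (t-1). d (t-1) j l * d t l 0) x"
          by (simp add: Y1 X.scale_sum_left)
        also have "\<dots> = 0" if "j < b (t - 1 - 1)"
          using res_comp[OF fr t1(1) that, of 0] t1 bt by simp
        finally show ?thesis by (auto simp: tor_map_def)
      qed
      then show ?thesis by auto
    qed simp
    have "\<exists>z\<in>ftup N (b (Suc (t-1))). Y1 = tor_map sX b d (Suc (t-1)) z"
      using tv fr Y1f cyc unfolding Tor_vanishes_def by blast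
    moreover have "Suc (t-1) = t" using t by simp
    ultimately obtain z where zf: "z \<in> ftup N (b t)" and z: "Y1 = tor_map sX b d t z"
      by auto
    have "tor_map sX b d t (w z) = (\<lambda>_. 0)"
      using z by (simp add: w_def tor_lin[OF mx] Y1_def)
    then obtain u where uf: "u \<in> ftup N (b (Suc t))" and u: "w z = tor_map sX b d (Suc t) u"
      using tv fr wf[OF zf] unfolding Tor_vanishes_def by blast
    have "w z 0 = (\<Sum>l<b (Suc t). sX (d (Suc t) 0 l) (u l))" using u bt by (simp add: tor_map_def)
    also have "\<dots> \<in> L"
      using mn[of "Suc t" 0] bt uf by (intro X.subspace_sum[OF LS] mL) (auto simp: ftup_def)
    finally show False using fin[OF zf] nL L_def by blast
  next
    assume ev: "Ext_vanishes sM sX N (t + 1) \<and> Ext_vanishes sM sX N t"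
    define Y1 where "Y1 = ext_map sX b d (Suc t) y"
    have Y1: "Y1 k = (if k < b (Suc t) then sX (d (Suc t) 0 k) x else 0)" for k
      using bt by (simp add: Y1_def ext_map_def sy)
    have Y1f: "Y1 \<in> ftup N (b (Suc t))"
      using mn[of "Suc t" 0] bt xN X.subspace_0[OF NS] by (auto simp: ftup_def Y1)
    have cyc: "ext_map sX b d (Suc (Suc t)) Y1 = (\<lambda>_. 0)"
    proof
      fix k
      have "(\<Sum>j<b (Suc t). sX (d (Suc (Suc t)) j k) (Y1 j))
          = sX (\<Sum>j<b (Suc t). d (Suc t) 0 j * d (Suc (Suc t)) j k) x"
        by (subst X.scale_sum_left, rule sum.cong) (simp_all add: Y1 mult.commute)
      also have "\<dots> = 0" if "k < b (Suc (Suc t))"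
        using res_comp[OF fr _ _ that, of 0] bt by simp
      finally show "ext_map sX b d (Suc (Suc t)) Y1 k = 0" by (auto simp: ext_map_def)
    qed
    have ev1: "Ext_vanishes sM sX N (Suc t)" using ev by simp
    have "\<exists>z\<in>ftup N (b (Suc t - 1)). Y1 = ext_map sX b d (Suc t) z"
      using ev1[unfolded Ext_vanishes_def, rule_format, OF fr Y1f cyc] by simp
    then obtain z where zf: "z \<in> ftup N (b t)" and z: "Y1 = ext_map sX b d (Suc t) z"
      by auto
    have wc: "ext_map sX b d (Suc t) (w z) = (\<lambda>_. 0)"
      using z by (simp add: w_def ext_lin[OF mx] Y1_def)
    obtain u where uf: "u \<in> ftup N (b (t - 1))" and u: "w z = ext_map sX b d t u"
      using ev[THEN conjunct2, unfolded Ext_vanishes_def, rule_format, OF fr wf[OF zf] wc] t by auto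
    have "w z 0 = (\<Sum>j<b (t-1). sX (d t j 0) (u j))" using u bt by (simp add: ext_map_def)
    also have "\<dots> \<in> L"
      using mn[OF t _ bt] uf by (intro X.subspace_sum[OF LS] mL) (auto simp: ftup_def)
    finally show False using fin[OF zf] nL L_def by blast
  qed
qed

theorem proposition3p16:
  fixes sM :: "'a::comm_ring_1 \<Rightarrow> 'n::ab_group_add \<Rightarrow> 'n"
    and sX :: "'a \<Rightarrow> 'x::ab_group_add \<Rightarrow> 'x"
    and N :: "'x set"
    and t :: nat
  assumes "noetherian_ring TYPE('a)"
    and "local_ring TYPE('a)"
    and "module sX" and "fin_gen sX"
    and "burch_submodule sX N"
    and "module sM" and "fin_gen sM"
    and "t \<ge> 1"
    and "(Tor_vanishes sM sX N t \<and> Tor_vanishes sM sX N (t - 1)) \<or>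
         (Ext_vanishes sM sX N (t + 1) \<and> Ext_vanishes sM sX N t)"
  shows "pd_less sM t"
proof -
  have c: "free_resolution sM (bb sM) (dd sM) (gg sM)"
    "\<And>i j k. 1 \<le> i \<Longrightarrow> j < bb sM (i-1) \<Longrightarrow> k < bb sM i \<Longrightarrow> dd sM i j k \<in> maxid"
    using construct[OF assms(1,6,7)] by auto
  have "bb sM t = 0" by (rule burch_kills[OF assms(3,5) c(1) assms(8) c(2) assms(9)])
  then have "free_resolution sM (\<lambda>i. if t \<le> i then 0 else bb sM i) (dd sM) (gg sM)"
    using truncate[OF c(1) assms(8)] by blast
  then show ?thesis unfolding pd_less_def by (intro exI[of _ "\<lambda>i. if t \<le> i then 0 else bb sM i"]) auto
qed

end
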